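(* Let $A\in\mathbb{R}^{n\times n}$, $B\in\mathbb{R}^{n\times m}$, $C\in\mathbb{R}^{p\times n}$ with $(A,C)$ observable, $\ell$ its observability index, and $\mathbf{F}_\ell,\mathbf{L}_\ell,\mathbf{B}_\ell,Z_\ell,\mathbf{A}_\ell$ as in the context. If $\mathbf{K}\in\mathbb{R}^{m\times(p\ell+m\ell)}$ is such that $\mathbf{A}_\ell+\mathbf{B}_\ell\mathbf{K}=\mathbf{F}_\ell+\mathbf{L}_\ell Z_\ell+\mathbf{B}_\ell\mathbf{K}$ is Schur, then $(x,\chi)=0$ is globally asymptotically stable for the system $x^+=Ax+Bu$, $y=Cx$, $\chi^+=\mathbf{F}_\ell\chi+\mathbf{L}_\ell y+\mathbf{B}_\ell u$, $u=\mathbf{K}\chi$.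
   Context: A square matrix is Schur if all its eigenvalues lie in the open unit disk. The observability index $\ell$ is the smallest $l$ with $\operatorname{rank}[C;CA;\dots;CA^{l-1}]=n$. $\mathcal{O}_\ell=[C;CA;\dots;CA^{\ell-1}]$; $\mathcal{T}_\ell\in\mathbb{R}^{p\ell\times m\ell}$ block lower triangular with $(i,j)$ block $CA^{i-j-1}B$ if $i>j$ and $0$ otherwise; $\mathcal{R}_\ell=[A^{\ell-1}B\ \cdots\ AB\ B]$; $\mathcal{O}_\ell^{L}$ a fixed left inverse of $\mathcal{O}_\ell$. $\mathbf{F}_\ell=\mathrm{blockdiag}(S_p,S_m)$, $S_q\in\mathbb{R}^{q\ell\times q\ell}$ with blocks $I_q$ at block positions $(i,i+1)$, $i=1,\dots,\ell-1$, zeros elsewhere; $\mathbf{L}_\ell\in\mathbb{R}^{(p\ell+m\ell)\times p}$ with $I_p$ in rows $p\ell-p+1,\dots,p\ell$, zeros elsewhere; $\mathbf{B}_\ell\in\mathbb{R}^{(p\ell+m\ell)\times m}$ with $I_m$ in its last $m$ rows, zeros elsewhere. $Z_\ell=[CA^\ell\mathcal{O}_\ell^L\ \ C\mathcal{R}_\ell-CA^\ell\mathcal{O}_\ell^L\mathcal{T}_\ell]$, $\mathbf{A}_\ell=\mathbf{F}_\ell+\mathbf{L}_\ell Z_\ell$. *)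

theory Defs
  imports "Jordan_Normal_Form.Matrix" "Jordan_Normal_Form.Char_Poly" "Jordan_Normal_Form.DL_Rank"
begin

text \<open>Observability matrix O_l = [C; CA; ...; CA^(l-1)], size (p*l) x n.\<close>
definition obs_mat :: "nat \<Rightarrow> real mat \<Rightarrow> real mat \<Rightarrow> nat \<Rightarrow> real mat" where
  "obs_mat p A C l = mat (p * l) (dim_col A)
     (\<lambda>(i, j). (C * A ^\<^sub>m (i div p)) $$ (i mod p, j))"

definition mrank :: "real mat \<Rightarrow> nat" where
  "mrank M = vec_space.rank (dim_row M) M"

definition observable :: "nat \<Rightarrow> real mat \<Rightarrow> real mat \<Rightarrow> bool" where
  "observable p A C = (mrank (obs_mat p A C (dim_col A)) = dim_col A)"

definition obs_index :: "nat \<Rightarrow> real mat \<Rightarrow> real mat \<Rightarrow> nat" where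
  "obs_index p A C = (LEAST l. mrank (obs_mat p A C l) = dim_col A)"

text \<open>Block lower triangular Toeplitz T_l, size (p*l) x (m*l): block (i,j) = C A^(i-j-1) B if i > j.\<close>
definition toep_mat :: "nat \<Rightarrow> nat \<Rightarrow> real mat \<Rightarrow> real mat \<Rightarrow> real mat \<Rightarrow> nat \<Rightarrow> real mat" where
  "toep_mat p m A B C l = mat (p * l) (m * l)
     (\<lambda>(i, j). if j div m < i div p
               then (C * A ^\<^sub>m (i div p - j div m - 1) * B) $$ (i mod p, j mod m)
               else 0)"

text \<open>R_l = [A^(l-1) B ... A B  B], size n x (m*l).\<close>
definition reach_mat :: "nat \<Rightarrow> real mat \<Rightarrow> real mat \<Rightarrow> nat \<Rightarrow> real mat" where
  "reach_mat m A B l = mat (dim_row A) (m * l)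
     (\<lambda>(i, j). (A ^\<^sub>m (l - 1 - j div m) * B) $$ (i, j mod m))"

definition shift_mat :: "nat \<Rightarrow> nat \<Rightarrow> real mat" where
  "shift_mat q l = mat (q * l) (q * l) (\<lambda>(i, j). if j = i + q then 1 else 0)"

definition F_mat :: "nat \<Rightarrow> nat \<Rightarrow> nat \<Rightarrow> real mat" where
  "F_mat p m l = four_block_mat (shift_mat p l) (0\<^sub>m (p * l) (m * l))
                                (0\<^sub>m (m * l) (p * l)) (shift_mat m l)"

text \<open>L_l: I_p in rows p*l-p+1..p*l (1-based), size (p*l+m*l) x p.\<close>
definition L_mat :: "nat \<Rightarrow> nat \<Rightarrow> nat \<Rightarrow> real mat" where
  "L_mat p m l = mat (p * l + m * l) p (\<lambda>(i, j). if i + p = p * l + j then 1 else 0)"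

definition Bl_mat :: "nat \<Rightarrow> nat \<Rightarrow> nat \<Rightarrow> real mat" where
  "Bl_mat p m l = mat (p * l + m * l) m (\<lambda>(i, j). if i + m = p * l + m * l + j then 1 else 0)"

definition Z_mat :: "nat \<Rightarrow> nat \<Rightarrow> real mat \<Rightarrow> real mat \<Rightarrow> real mat \<Rightarrow> real mat \<Rightarrow> nat \<Rightarrow> real mat" where
  "Z_mat p m A B C OL l = four_block_mat
     (C * A ^\<^sub>m l * OL)
     (C * reach_mat m A B l - C * A ^\<^sub>m l * OL * toep_mat p m A B C l)
     (0\<^sub>m 0 (p * l)) (0\<^sub>m 0 (m * l))"

definition schur :: "real mat \<Rightarrow> bool" where
  "schur M = (\<forall>k::complex. eigenvalue (map_mat complex_of_real M) k \<longrightarrow> cmod k < 1)"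

definition vnorm :: "real vec \<Rightarrow> real" where
  "vnorm v = sqrt (\<Sum>i<dim_vec v. (v $ i)^2)"

text \<open>Global asymptotic stability of the origin for x(k+1) = f(x(k)) on state set S
  (the origin 0 \<in> S being an equilibrium is part of the statement to be proved).\<close>
definition gas :: "('s \<Rightarrow> 's) \<Rightarrow> 's set \<Rightarrow> ('s \<Rightarrow> real) \<Rightarrow> 's \<Rightarrow> bool" where
  "gas f S nrm z0 =
     (z0 \<in> S \<and> f z0 = z0 \<and>
      (\<forall>\<epsilon>>0. \<exists>\<delta>>0. \<forall>z\<in>S. nrm z < \<delta> \<longrightarrow> (\<forall>k. nrm ((f ^^ k) z) < \<epsilon>)) \<and>
      (\<forall>z\<in>S. (\<lambda>k. nrm ((f ^^ k) z)) \<longlonglongrightarrow> 0))"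

definition closed_loop ::
  "real mat \<Rightarrow> real mat \<Rightarrow> real mat \<Rightarrow> real mat \<Rightarrow> real mat \<Rightarrow> real mat \<Rightarrow> real mat
   \<Rightarrow> real vec \<times> real vec \<Rightarrow> real vec \<times> real vec" where
  "closed_loop A B C F L Bl K = (\<lambda>(x, \<chi>).
     (let y = C *\<^sub>v x; u = K *\<^sub>v \<chi> in
      (A *\<^sub>v x + B *\<^sub>v u, F *\<^sub>v \<chi> + L *\<^sub>v y + Bl *\<^sub>v u)))"

definition pair_norm :: "real vec \<times> real vec \<Rightarrow> real" where
  "pair_norm z = sqrt ((vnorm (fst z))^2 + (vnorm (snd z))^2)"

end

theory Submission
  imports Defs "Jordan_Normal_Form.Spectral_Radius"
begin


lemma smult_pow_mat:
  assumes "A \<in> carrier_mat n n"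
  shows "(a \<cdot>\<^sub>m A) ^\<^sub>m k = (a ^ k) \<cdot>\<^sub>m (A ^\<^sub>m k :: 'a :: comm_ring_1 mat)"
proof (induct k)
  case 0 then show ?case using assms by (auto intro!: eq_matI)
next
  case (Suc k)
  have "(a \<cdot>\<^sub>m A) ^\<^sub>m Suc k = (a ^ k \<cdot>\<^sub>m A ^\<^sub>m k) * (a \<cdot>\<^sub>m A)" using Suc by simp
  also have "\<dots> = a ^ Suc k \<cdot>\<^sub>m (A ^\<^sub>m k * A)"
    using assms by (simp add: mult_smult_assoc_mat[of _ n n] mult_smult_distrib[of _ n n])
      (rule eq_matI, auto simp: ac_simps)
  finally show ?case by simp
qed

lemma smult_mat_vec:
  assumes "A \<in> carrier_mat n n" "v \<in> carrier_vec n"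
  shows "(a \<cdot>\<^sub>m A) *\<^sub>v v = a \<cdot>\<^sub>v (A *\<^sub>v (v :: 'a :: comm_ring_1 vec))"
  using assms by (intro eq_vecI) (auto simp: scalar_prod_def sum_distrib_left ac_simps)

lemma schur_decay:
  assumes M: "M \<in> carrier_mat N N" and S: "schur M"
  shows "\<exists>c r. 0 < r \<and> r < 1 \<and> (\<forall>k i j. i < N \<longrightarrow> j < N \<longrightarrow> \<bar>(M ^\<^sub>m k) $$ (i,j)\<bar> \<le> c * r ^ k)"
proof (cases "N = 0")
  case True
  then show ?thesis by (intro exI[of _ 0] exI[of _ "1/2"]) auto
next
  case False
  hence N: "N > 0" by auto
  define Mc where "Mc = map_mat complex_of_real M"
  have Mc: "Mc \<in> carrier_mat N N" using M by (auto simp: Mc_def)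
  define \<rho> where "\<rho> = spectral_radius Mc"
  from spectral_radius_mem_max(1)[OF Mc N] obtain ev where ev: "ev \<in> spectrum Mc" "\<rho> = norm ev"
    unfolding \<rho>_def by auto
  have "\<rho> < 1" using S ev unfolding schur_def spectrum_def Mc_def by auto
  have "\<rho> \<ge> 0" using ev by auto
  define r where "r = (1 + \<rho>) / 2"
  have r: "0 < r" "r < 1" "\<rho> < r" using \<open>\<rho> < 1\<close> \<open>\<rho> \<ge> 0\<close> by (auto simp: r_def)
  define Mc' where "Mc' = complex_of_real (1 / r) \<cdot>\<^sub>m Mc"
  have Mc': "Mc' \<in> carrier_mat N N" using Mc by (auto simp: Mc'_def)
  have ev_small: "norm e < 1" if "e \<in> spectrum Mc'" for e
  proof -
    from that obtain v where v: "eigenvector Mc' v e" unfolding spectrum_def eigenvalue_def by auto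
    hence vc: "v \<in> carrier_vec N" and v0: "v \<noteq> 0\<^sub>v N" and eq: "Mc' *\<^sub>v v = e \<cdot>\<^sub>v v"
      using Mc' unfolding eigenvector_def by auto
    have "Mc *\<^sub>v v = (complex_of_real r * e) \<cdot>\<^sub>v v"
    proof -
      have "Mc *\<^sub>v v = complex_of_real r \<cdot>\<^sub>v (Mc' *\<^sub>v v)"
        unfolding Mc'_def using smult_mat_vec[OF Mc vc] r
        by (auto simp: smult_smult_assoc of_real_mult[symmetric] simp del: of_real_mult)
      also have "\<dots> = (complex_of_real r * e) \<cdot>\<^sub>v v" unfolding eq by (simp add: smult_smult_assoc)
      finally show ?thesis .
    qed
    hence "eigenvector Mc v (complex_of_real r * e)" using vc v0 Mc unfolding eigenvector_def by auto
    hence "complex_of_real r * e \<in> spectrum Mc" unfolding spectrum_def eigenvalue_def by auto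
    from spectral_radius_mem_max(2)[OF Mc N imageI[OF this, of norm]]
    have "r * norm e \<le> \<rho>" using r unfolding \<rho>_def by (simp add: norm_mult)
    hence "r * norm e < r * 1" using r(3) by simp
    thus ?thesis using r by (simp add: mult_less_cancel_left_pos)
  qed
  have "spectral_radius Mc' < 1"
    using spectral_radius_mem_max(1)[OF Mc' N] ev_small by auto
  from spectral_radius_jnf_norm_bound_less_1_upper_triangular[OF Mc' this]
  obtain c where c: "\<And>k. norm_bound (Mc' ^\<^sub>m k) c" by auto
  show ?thesis
  proof (rule exI[of _ c], rule exI[of _ r], intro conjI allI impI r(1) r(2))
    fix k i j assume ij: "i < N" "j < N"
    have pw: "Mc' ^\<^sub>m k = (complex_of_real (1/r)) ^ k \<cdot>\<^sub>m (Mc ^\<^sub>m k)"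
      unfolding Mc'_def by (rule smult_pow_mat[OF Mc])
    have "Mc ^\<^sub>m k = map_mat complex_of_real (M ^\<^sub>m k)"
      unfolding Mc_def by (rule of_real_hom.mat_hom_pow[OF M, symmetric])
    hence e1: "(Mc ^\<^sub>m k) $$ (i,j) = complex_of_real ((M ^\<^sub>m k) $$ (i,j))" using ij M by auto
    have e2: "(Mc' ^\<^sub>m k) $$ (i,j) = (complex_of_real (1/r)) ^ k * (Mc ^\<^sub>m k) $$ (i,j)"
      unfolding pw using ij Mc by auto
    have "norm ((Mc' ^\<^sub>m k) $$ (i,j)) \<le> c" using c[of k] ij Mc' unfolding norm_bound_def by auto
    moreover have "cmod (1 / complex_of_real r) = 1 / r" using r by (simp add: norm_divide)
    ultimately have "(1/r) ^ k * \<bar>(M ^\<^sub>m k) $$ (i,j)\<bar> \<le> c" unfolding e2 e1 using r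
      by (simp add: norm_mult norm_power)
    hence "r ^ k * ((1/r) ^ k * \<bar>(M ^\<^sub>m k) $$ (i,j)\<bar>) \<le> r ^ k * c" using r
      by (intro mult_left_mono) auto
    thus "\<bar>(M ^\<^sub>m k) $$ (i,j)\<bar> \<le> c * r ^ k" using r
      by (simp add: power_one_over field_simps)
  qed
qed


lemma vnorm_nonneg: "vnorm v \<ge> 0" unfolding vnorm_def by (auto intro: sum_nonneg)

lemma abs_le_vnorm: assumes "i < dim_vec v" shows "\<bar>v $ i\<bar> \<le> vnorm v"
proof -
  have "(v $ i)^2 \<le> (\<Sum>j<dim_vec v. (v $ j)^2)"
    using assms by (intro member_le_sum) auto
  hence "sqrt ((v $ i)^2) \<le> vnorm v" unfolding vnorm_def by (rule real_sqrt_le_mono)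
  thus ?thesis by simp
qed

lemma vnorm_le_bound:
  assumes v: "v \<in> carrier_vec a" and b: "\<And>i. i < a \<Longrightarrow> \<bar>v $ i\<bar> \<le> B" and B: "B \<ge> 0"
  shows "vnorm v \<le> real a * B"
proof -
  have "(\<Sum>j<a. (v $ j)^2) \<le> (\<Sum>j<a. B^2)"
  proof (intro sum_mono)
    fix j assume "j \<in> {..<a}"
    hence "\<bar>v $ j\<bar> \<le> B" using b by auto
    thus "(v $ j)^2 \<le> B^2" by (metis abs_ge_zero power2_abs power_mono)
  qed
  hence "vnorm v \<le> sqrt (real a * B^2)" unfolding vnorm_def using v by (auto intro: real_sqrt_le_mono)
  also have "\<dots> = sqrt (real a) * B" using B by (simp add: real_sqrt_mult)
  also have "\<dots> \<le> real a * B"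
  proof (cases "a = 0")
    case False
    hence a1: "real a \<ge> 1" by auto
    hence "real a * 1 \<le> real a * real a" by (intro mult_left_mono) auto
    hence "sqrt (real a) \<le> sqrt (real a * real a)" by (intro real_sqrt_le_mono) auto
    hence "sqrt (real a) \<le> real a" by simp
    thus ?thesis using B by (intro mult_right_mono) auto
  qed simp
  finally show ?thesis .
qed

lemma mat_entry_bound: "\<exists>c\<ge>0. \<forall>i j. i < dim_row M \<longrightarrow> j < dim_col M \<longrightarrow> \<bar>M $$ (i,j)\<bar> \<le> (c::real)"
proof (intro exI[of _ "\<Sum>i<dim_row M. \<Sum>j<dim_col M. \<bar>M $$ (i,j)\<bar>"] conjI allI impI)
  fix i j assume ij: "i < dim_row M" "j < dim_col M"
  have "\<bar>M $$ (i,j)\<bar> \<le> (\<Sum>j<dim_col M. \<bar>M $$ (i,j)\<bar>)" using ij by (intro member_le_sum) auto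
  also have "\<dots> \<le> (\<Sum>i<dim_row M. \<Sum>j<dim_col M. \<bar>M $$ (i,j)\<bar>)"
    using ij by (intro member_le_sum[of i "{..<dim_row M}" "\<lambda>i. \<Sum>j<dim_col M. \<bar>M $$ (i,j)\<bar>"]) (auto intro: sum_nonneg)
  finally show "\<bar>M $$ (i,j)\<bar> \<le> (\<Sum>i<dim_row M. \<Sum>j<dim_col M. \<bar>M $$ (i,j)\<bar>)" .
qed (auto intro: sum_nonneg)

lemma mat_vec_entry:
  assumes M: "M \<in> carrier_mat a b" and c: "\<And>i j. i < a \<Longrightarrow> j < b \<Longrightarrow> \<bar>M $$ (i,j)\<bar> \<le> c"
    and v: "v \<in> carrier_vec b" and i: "i < a" and c0: "c \<ge> 0"
  shows "\<bar>(M *\<^sub>v v) $ i\<bar> \<le> real b * c * vnorm v"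
proof -
  have "(M *\<^sub>v v) $ i = (\<Sum>j<b. M $$ (i,j) * v $ j)"
    using M v i by (auto simp: scalar_prod_def lessThan_atLeast0)
  also have "\<bar>\<dots>\<bar> \<le> (\<Sum>j<b. \<bar>M $$ (i,j) * v $ j\<bar>)" by (rule sum_abs)
  also have "\<dots> \<le> (\<Sum>j<b. c * vnorm v)"
  proof (intro sum_mono)
    fix j assume "j \<in> {..<b}"
    hence "\<bar>M $$ (i,j)\<bar> \<le> c" "\<bar>v $ j\<bar> \<le> vnorm v" using c i v abs_le_vnorm[of j v] by auto
    thus "\<bar>M $$ (i,j) * v $ j\<bar> \<le> c * vnorm v" unfolding abs_mult
      by (intro mult_mono) (auto simp: c0)
  qed
  finally show ?thesis by simp
qed

lemma mat_vec_bound: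
  assumes M: "M \<in> carrier_mat a b"
  shows "\<exists>c\<ge>0. \<forall>v \<in> carrier_vec b. (\<forall>i<a. \<bar>(M *\<^sub>v v) $ i\<bar> \<le> c * vnorm v) \<and> vnorm (M *\<^sub>v v) \<le> c * vnorm v"
proof -
  obtain c where c0: "c \<ge> 0" and c: "\<And>i j. i < a \<Longrightarrow> j < b \<Longrightarrow> \<bar>M $$ (i,j)\<bar> \<le> c"
    using mat_entry_bound[of M] M by auto
  show ?thesis
  proof (intro exI[of _ "(real a + 1) * (real b * c)"] conjI ballI allI impI)
    show "0 \<le> (real a + 1) * (real b * c)" using c0 by auto
    fix v :: "real vec" assume v: "v \<in> carrier_vec b"
    have e: "\<bar>(M *\<^sub>v v) $ i\<bar> \<le> real b * c * vnorm v" if "i < a" for i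
      using mat_vec_entry[OF M c v that c0] by auto
    have nn: "real b * c * vnorm v \<ge> 0" using c0 vnorm_nonneg[of v] by auto
    have le: "real b * c * vnorm v \<le> (real a + 1) * (real b * c) * vnorm v"
    proof -
      have "real b * c * vnorm v = 1 * (real b * c * vnorm v)" by simp
      also have "\<dots> \<le> (real a + 1) * (real b * c * vnorm v)" using nn by (intro mult_right_mono) auto
      finally show ?thesis by (simp add: mult.assoc)
    qed
    fix i assume "i < a" thus "\<bar>(M *\<^sub>v v) $ i\<bar> \<le> (real a + 1) * (real b * c) * vnorm v"
      using e le by force
  next
    fix v :: "real vec" assume v: "v \<in> carrier_vec b"
    have e: "\<bar>(M *\<^sub>v v) $ i\<bar> \<le> real b * c * vnorm v" if "i < a" for i
      using mat_vec_entry[OF M c v that c0] by auto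
    have nn: "real b * c * vnorm v \<ge> 0" using c0 vnorm_nonneg[of v] by auto
    have "vnorm (M *\<^sub>v v) \<le> real a * (real b * c * vnorm v)"
      by (rule vnorm_le_bound[of "M *\<^sub>v v" a "real b * c * vnorm v", OF _ e nn]) (use M in \<open>auto intro!: carrier_vecI\<close>)
    also have "\<dots> \<le> (real a + 1) * (real b * c * vnorm v)" using nn by (intro mult_right_mono) auto
    also have "\<dots> = (real a + 1) * (real b * c) * vnorm v" by (simp add: mult.assoc)
    finally show "vnorm (M *\<^sub>v v) \<le> (real a + 1) * (real b * c) * vnorm v" .
  qed
qed

lemma pair_norm_nonneg: "pair_norm z \<ge> 0" unfolding pair_norm_def by auto

lemma pair_norm_fst: "vnorm (fst z) \<le> pair_norm z"
  unfolding pair_norm_def by (rule real_le_rsqrt) auto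

lemma pair_norm_snd: "vnorm (snd z) \<le> pair_norm z"
  unfolding pair_norm_def by (rule real_le_rsqrt) auto

lemma pair_norm_le: "pair_norm z \<le> vnorm (fst z) + vnorm (snd z)"
proof -
  have a: "vnorm (fst z) \<ge> 0" "vnorm (snd z) \<ge> 0" by (auto simp: vnorm_nonneg)
  have "(vnorm (fst z))^2 + (vnorm (snd z))^2 \<le> (vnorm (fst z) + vnorm (snd z))^2"
    using a by (simp add: power2_sum)
  hence "pair_norm z \<le> sqrt ((vnorm (fst z) + vnorm (snd z))^2)"
    unfolding pair_norm_def by (rule real_sqrt_le_mono)
  thus ?thesis using a by simp
qed


lemma sum_single:
  fixes N t :: nat
  assumes "\<And>c. c < N \<Longrightarrow> P c \<longleftrightarrow> c = t"
  shows "(\<Sum>c = 0..<N. (if P c then 1 else 0) * (g c :: real)) = (if t < N then g t else 0)"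
proof -
  have "(\<Sum>c = 0..<N. (if P c then 1 else 0) * (g c :: real)) = (\<Sum>c = 0..<N. if c = t then g c else 0)"
    using assms by (intro sum.cong) auto
  also have "\<dots> = (if t < N then g t else 0)" by (subst sum.delta) auto
  finally show ?thesis .
qed

lemma sum_none:
  fixes N :: nat
  assumes "\<And>c. c < N \<Longrightarrow> \<not> P c"
  shows "(\<Sum>c = 0..<N. (if P c then 1 else 0) * (g c :: real)) = 0"
  using assms by (intro sum.neutral) auto

lemma F_vec:
  assumes h: "h \<in> carrier_vec (p*l+m*l)" and r: "r < p*l+m*l"
  shows "(F_mat p m l *\<^sub>v h) $ r = (if r < p*l then (if r + p < p*l then h $ (r+p) else 0)
            else (if r + m < p*l+m*l then h $ (r+m) else 0))"
proof -
  have dims: "dim_row (F_mat p m l) = p*l+m*l" "dim_col (F_mat p m l) = p*l+m*l"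
    by (auto simp: F_mat_def shift_mat_def)
  have "(F_mat p m l *\<^sub>v h) $ r = (\<Sum>c = 0..<p*l+m*l. F_mat p m l $$ (r,c) * h $ c)"
    using dims r h by (simp add: scalar_prod_def)
  also have "\<dots> = (\<Sum>c = 0..<p*l+m*l. (if (if r < p*l then c = r + p \<and> c < p*l else c = r + m) then 1 else 0) * h $ c)"
    using r by (intro sum.cong refl) (auto simp: F_mat_def shift_mat_def)
  also have "\<dots> = (if r < p*l then (if r + p < p*l then h $ (r+p) else 0)
            else (if r + m < p*l+m*l then h $ (r+m) else 0))"
  proof (cases "r < p*l")
    case True
    then show ?thesis
    proof (cases "r + p < p*l")
      case True
      then show ?thesis using \<open>r < p*l\<close> by (subst sum_single[where t="r+p"]) auto
    next
      case False
      then show ?thesis using \<open>r < p*l\<close> by (subst sum_none) auto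
    qed
  next
    case False
    then show ?thesis by (subst sum_single[where t="r+m"]) auto
  qed
  finally show ?thesis .
qed

lemma L_vec:
  assumes y: "y \<in> carrier_vec p" and r: "r < p*l+m*l"
  shows "(L_mat p m l *\<^sub>v y) $ r = (if p*l \<le> r + p \<and> r < p*l then y $ (r + p - p*l) else 0)"
proof -
  have "(L_mat p m l *\<^sub>v y) $ r = (\<Sum>c = 0..<p. (if r + p = p * l + c then 1 else 0) * y $ c)"
    using r y by (simp add: scalar_prod_def L_mat_def)
  also have "\<dots> = (if p*l \<le> r + p \<and> r < p*l then y $ (r + p - p*l) else 0)"
  proof (cases "p*l \<le> r + p")
    case True
    then show ?thesis by (subst sum_single[where t="r + p - p*l"]) auto
  next
    case False
    then show ?thesis by (subst sum_none) auto
  qed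
  finally show ?thesis .
qed

lemma Bl_vec:
  assumes u: "u \<in> carrier_vec m" and r: "r < p*l+m*l"
  shows "(Bl_mat p m l *\<^sub>v u) $ r = (if p*l+m*l \<le> r + m then u $ (r + m - (p*l+m*l)) else 0)"
proof -
  have "(Bl_mat p m l *\<^sub>v u) $ r = (\<Sum>c = 0..<m. (if r + m = p * l + m * l + c then 1 else 0) * u $ c)"
    using r u by (simp add: scalar_prod_def Bl_mat_def)
  also have "\<dots> = (if p*l+m*l \<le> r + m then u $ (r + m - (p*l+m*l)) else 0)"
  proof (cases "p*l+m*l \<le> r + m")
    case True
    then show ?thesis using r by (subst sum_single[where t="r + m - (p*l+m*l)"]) auto
  next
    case False
    then show ?thesis by (subst sum_none) auto
  qed
  finally show ?thesis .
qed


lemma last_block: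
  fixes r p l :: nat assumes "r < p*l" "p*l \<le> r + p"
  shows "r div p = l - 1" "r + p - p*l = r mod p"
proof -
  have p: "p > 0" using assms by (cases p) auto
  have l: "l > 0" using assms by (cases l) auto
  have q1: "r div p < l" using assms(1) p by (simp add: div_less_iff_less_mult mult.commute)
  have "p*(l-1) \<le> r" using assms(2) l by (cases l) auto
  hence q2: "l - 1 \<le> r div p" using p by (simp add: less_eq_div_iff_mult_less_eq mult.commute)
  show qq: "r div p = l - 1" using q1 q2 by auto
  have "r = p * (r div p) + r mod p" by simp
  hence "r = p*(l-1) + r mod p" using qq by simp
  thus "r + p - p*l = r mod p" using l by (cases l) (auto simp: algebra_simps)
qed

locale traj =
  fixes n m p l :: nat and A B C K :: "real mat" and X H :: "nat \<Rightarrow> real vec"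
  assumes A: "A \<in> carrier_mat n n" and B: "B \<in> carrier_mat n m" and C: "C \<in> carrier_mat p n"
  and K: "K \<in> carrier_mat m (p*l+m*l)"
  and Xc: "\<And>k. X k \<in> carrier_vec n" and Hc: "\<And>k. H k \<in> carrier_vec (p*l+m*l)"
  and Xs: "\<And>k. X (Suc k) = A *\<^sub>v X k + B *\<^sub>v (K *\<^sub>v H k)"
  and Hs: "\<And>k. H (Suc k) = F_mat p m l *\<^sub>v H k + L_mat p m l *\<^sub>v (C *\<^sub>v X k) + Bl_mat p m l *\<^sub>v (K *\<^sub>v H k)"
begin

definition "y k = C *\<^sub>v X k"
definition "u k = K *\<^sub>v H k"

lemma yc: "y k \<in> carrier_vec p" unfolding y_def using C Xc by auto
lemma uc: "u k \<in> carrier_vec m" unfolding u_def using K Hc by auto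

lemma H_Suc_entry:
  assumes r: "r < p*l+m*l"
  shows "H (Suc k) $ r = (if r < p*l then (if r + p < p*l then H k $ (r+p) else y k $ (r+p-p*l))
            else (if r + m < p*l+m*l then H k $ (r+m) else u k $ (r+m-(p*l+m*l))))"
proof -
  have d: "dim_vec (F_mat p m l *\<^sub>v H k) = p*l+m*l" "dim_vec (L_mat p m l *\<^sub>v (C *\<^sub>v X k)) = p*l+m*l"
     "dim_vec (Bl_mat p m l *\<^sub>v (K *\<^sub>v H k)) = p*l+m*l"
    by (auto simp: F_mat_def L_mat_def Bl_mat_def shift_mat_def)
  have "H (Suc k) $ r = (F_mat p m l *\<^sub>v H k) $ r + (L_mat p m l *\<^sub>v y k) $ r + (Bl_mat p m l *\<^sub>v u k) $ r"
    unfolding Hs y_def u_def using r d by simp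
  also have "\<dots> = (if r < p*l then (if r + p < p*l then H k $ (r+p) else 0)
            else (if r + m < p*l+m*l then H k $ (r+m) else 0))
       + (if p*l \<le> r + p \<and> r < p*l then y k $ (r + p - p*l) else 0)
       + (if p*l+m*l \<le> r + m then u k $ (r + m - (p*l+m*l)) else 0)"
    using F_vec[OF Hc r] L_vec[OF yc r] Bl_vec[OF uc r] by simp
  also have "\<dots> = (if r < p*l then (if r + p < p*l then H k $ (r+p) else y k $ (r+p-p*l))
            else (if r + m < p*l+m*l then H k $ (r+m) else u k $ (r+m-(p*l+m*l))))"
  proof (cases "r < p*l")
    case True
    hence "l \<ge> 1" by (cases l) auto
    hence "m \<le> m * l" by simp
    hence "\<not> p*l+m*l \<le> r + m" using True by linarith
    thus ?thesis using True by auto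
  qed auto
  finally show ?thesis .
qed

lemma winY:
  "r < p*l \<Longrightarrow> l \<le> k + r div p \<Longrightarrow> H k $ r = y (k + r div p - l) $ (r mod p)"
proof (induct k arbitrary: r)
  case 0
  have p: "p > 0" using 0 by (cases p) auto
  have "r div p < l" using 0(1) p by (simp add: div_less_iff_less_mult mult.commute)
  thus ?case using 0 by auto
next
  case (Suc k)
  have p: "p > 0" using Suc by (cases p) auto
  have rN: "r < p*l+m*l" using Suc by auto
  show ?case
  proof (cases "r + p < p*l")
    case True
    have e: "(r + p) div p = r div p + 1" "(r+p) mod p = r mod p" using p by auto
    have "H (Suc k) $ r = H k $ (r+p)" using H_Suc_entry[OF rN] True Suc by auto
    also have "\<dots> = y (k + (r+p) div p - l) $ ((r+p) mod p)" using Suc True e by (intro Suc(1)) auto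
    finally show ?thesis using e by simp
  next
    case False
    note lb = last_block[OF Suc(2)]
    have l0: "l > 0" using Suc(2) by (cases l) auto
    have "H (Suc k) $ r = y k $ (r+p-p*l)" using H_Suc_entry[OF rN] False Suc by auto
    moreover have "Suc (k + (l - 1)) - l = k" using l0 by simp
    ultimately show ?thesis using lb False Suc by simp
  qed
qed

lemma winU:
  "r < m*l \<Longrightarrow> l \<le> k + r div m \<Longrightarrow> H k $ (p*l + r) = u (k + r div m - l) $ (r mod m)"
proof (induct k arbitrary: r)
  case 0
  have p: "m > 0" using 0 by (cases m) auto
  have "r div m < l" using 0(1) p by (simp add: div_less_iff_less_mult mult.commute)
  thus ?case using 0 by auto
next
  case (Suc k)
  have p: "m > 0" using Suc by (cases m) auto
  have rN: "p*l + r < p*l+m*l" using Suc by auto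
  show ?case
  proof (cases "r + m < m*l")
    case True
    have e: "(r + m) div m = r div m + 1" "(r+m) mod m = r mod m" using p by auto
    have "H (Suc k) $ (p*l+r) = H k $ (p*l + (r+m))" using H_Suc_entry[OF rN] True Suc by (auto simp: add.assoc)
    also have "\<dots> = u (k + (r+m) div m - l) $ ((r+m) mod m)" using Suc True e by (intro Suc(1)) auto
    finally show ?thesis using e by simp
  next
    case False
    note lb = last_block[OF Suc(2)]
    have l0: "l > 0" using Suc(2) by (cases l) auto
    have "H (Suc k) $ (p*l+r) = u k $ (r+m-m*l)" using H_Suc_entry[OF rN] False Suc by auto
    moreover have "Suc (k + (l - 1)) - l = k" using l0 by simp
    ultimately show ?thesis using lb False Suc by simp
  qed
qed

end


lemma pow_mat_Suc_left:
  assumes A: "A \<in> carrier_mat n n"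
  shows "A ^\<^sub>m Suc j = A * A ^\<^sub>m j"
proof (induct j)
  case 0 then show ?case using A by simp
next
  case (Suc j)
  have "A ^\<^sub>m Suc (Suc j) = (A * A ^\<^sub>m j) * A" using Suc by simp
  also have "\<dots> = A * (A ^\<^sub>m j * A)" using A by (intro assoc_mult_mat) auto
  finally show ?case by simp
qed

lemma sum_split_block:
  fixes g :: "nat \<Rightarrow> real"
  shows "(\<Sum>c = 0..<m*i+m. g c) = (\<Sum>c = 0..<m*i. g c) + (\<Sum>q = 0..<m. g (m*i + q))"
proof -
  have "(\<Sum>c = 0..<m*i+m. g c) = (\<Sum>c = 0..<m*i. g c) + (\<Sum>c = m*i..<m*i+m. g c)"
    by (rule sum.atLeastLessThan_concat[symmetric]) auto
  also have "(\<Sum>c = m*i..<m*i+m. g c) = (\<Sum>q = 0..<m. g (m*i + q))"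
    using sum.shift_bounds_nat_ivl[of g 0 "m*i" m] by (simp add: add.commute)
  finally show ?thesis .
qed

context traj begin

definition "Uw s i = vec (m*i) (\<lambda>c. u (s + c div m) $ (c mod m))"

lemma Uw_c: "Uw s i \<in> carrier_vec (m*i)" unfolding Uw_def by auto

lemma reach_c: "reach_mat m A B i \<in> carrier_mat n (m*i)" unfolding reach_mat_def using A by auto

lemma reach_Suc:
  "reach_mat m A B (Suc i) *\<^sub>v Uw s (Suc i) = (A * reach_mat m A B i) *\<^sub>v Uw s i + B *\<^sub>v u (s+i)"
proof (rule eq_vecI)
  show "dim_vec (reach_mat m A B (Suc i) *\<^sub>v Uw s (Suc i)) = dim_vec ((A * reach_mat m A B i) *\<^sub>v Uw s i + B *\<^sub>v u (s+i))"
    using A B by (simp add: reach_mat_def)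
  fix a assume "a < dim_vec ((A * reach_mat m A B i) *\<^sub>v Uw s i + B *\<^sub>v u (s+i))"
  hence a: "a < n" using A B by simp
  have "(reach_mat m A B (Suc i) *\<^sub>v Uw s (Suc i)) $ a =
    (\<Sum>c = 0..<m*i+m. (A ^\<^sub>m (i - c div m) * B) $$ (a, c mod m) * u (s + c div m) $ (c mod m))"
    using a A by (simp add: reach_mat_def Uw_def scalar_prod_def algebra_simps)
  also have "\<dots> = (\<Sum>c = 0..<m*i. (A ^\<^sub>m (i - c div m) * B) $$ (a, c mod m) * u (s + c div m) $ (c mod m))
     + (\<Sum>q = 0..<m. B $$ (a, q) * u (s + i) $ q)"
    unfolding sum_split_block
  proof (intro arg_cong2[where f="(+)"] sum.cong refl)
    fix q assume q: "q \<in> {0..<m}"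
    hence "(m*i+q) div m = i" "(m*i+q) mod m = q" by auto
    thus "(A ^\<^sub>m (i - (m * i + q) div m) * B) $$ (a, (m * i + q) mod m) * u (s + (m * i + q) div m) $ ((m * i + q) mod m)
      = B $$ (a, q) * u (s + i) $ q" using A B a q by simp
  qed
  also have "(\<Sum>c = 0..<m*i. (A ^\<^sub>m (i - c div m) * B) $$ (a, c mod m) * u (s + c div m) $ (c mod m))
     = ((A * reach_mat m A B i) *\<^sub>v Uw s i) $ a"
  proof -
    have "((A * reach_mat m A B i) *\<^sub>v Uw s i) $ a = (\<Sum>c = 0..<m*i. (A * reach_mat m A B i) $$ (a,c) * Uw s i $ c)"
    proof -
      have dU: "dim_vec (Uw s i) = m*i" using Uw_c[of s i] by auto
      have dA: "dim_row (A * reach_mat m A B i) = n" "dim_col (A * reach_mat m A B i) = m*i"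
        using A reach_c[of i] by auto
      show ?thesis unfolding index_mult_mat_vec[OF a[folded dA(1)]] scalar_prod_def dU
        by (rule sum.cong[OF refl]) (simp add: dA a del: index_mult_mat)
    qed
    also have "\<dots> = (\<Sum>c = 0..<m*i. (A ^\<^sub>m (i - c div m) * B) $$ (a, c mod m) * u (s + c div m) $ (c mod m))"
    proof (intro sum.cong refl)
      fix c assume c: "c \<in> {0..<m*i}"
      hence m0: "m > 0" by (cases m) auto
      have ci: "c div m < i" using c m0 by (simp add: div_less_iff_less_mult mult.commute)
      have cm: "c mod m < m" using m0 by simp
      have "(A * reach_mat m A B i) $$ (a,c) = (A * (A ^\<^sub>m (i - 1 - c div m) * B)) $$ (a, c mod m)"
        using a c A B cm by (simp add: reach_mat_def scalar_prod_def col_def)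
      also have "A * (A ^\<^sub>m (i - 1 - c div m) * B) = A ^\<^sub>m (i - c div m) * B"
      proof -
        have "A * (A ^\<^sub>m (i - 1 - c div m) * B) = (A * A ^\<^sub>m (i - 1 - c div m)) * B"
          using A B by (intro assoc_mult_mat[symmetric]) auto
        also have "A * A ^\<^sub>m (i - 1 - c div m) = A ^\<^sub>m (Suc (i - 1 - c div m))"
          by (rule pow_mat_Suc_left[OF A, symmetric])
        also have "Suc (i - 1 - c div m) = i - c div m" using ci by auto
        finally show ?thesis .
      qed
      finally show "(A * reach_mat m A B i) $$ (a,c) * Uw s i $ c =
        (A ^\<^sub>m (i - c div m) * B) $$ (a, c mod m) * u (s + c div m) $ (c mod m)"
        using c by (simp add: Uw_def)
    qed
    finally show ?thesis by simp
  qed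
  also have "(\<Sum>q = 0..<m. B $$ (a, q) * u (s + i) $ q) = (B *\<^sub>v u (s+i)) $ a"
    using a B uc[of "s+i"] by (auto simp: scalar_prod_def intro!: sum.cong)
  finally show "(reach_mat m A B (Suc i) *\<^sub>v Uw s (Suc i)) $ a = ((A * reach_mat m A B i) *\<^sub>v Uw s i + B *\<^sub>v u (s+i)) $ a"
    using a A B by simp
qed

lemma trajX: "X (s+i) = A ^\<^sub>m i *\<^sub>v X s + reach_mat m A B i *\<^sub>v Uw s i"
proof (induct i)
  case 0
  have "reach_mat m A B 0 *\<^sub>v Uw s 0 = 0\<^sub>v n"
    using A by (intro eq_vecI) (auto simp: reach_mat_def Uw_def scalar_prod_def)
  thus ?case using Xc[of s] A by simp
next
  case (Suc i)
  have "X (s + Suc i) = A *\<^sub>v X (s+i) + B *\<^sub>v u (s+i)" using Xs[of "s+i"] by (simp add: u_def)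
  also have "\<dots> = A *\<^sub>v (A ^\<^sub>m i *\<^sub>v X s) + A *\<^sub>v (reach_mat m A B i *\<^sub>v Uw s i) + B *\<^sub>v u (s+i)"
  proof -
    have c1: "A ^\<^sub>m i *\<^sub>v X s \<in> carrier_vec n" by (intro mult_mat_vec_carrier[OF pow_carrier_mat[OF A]] Xc)
    have c2: "reach_mat m A B i *\<^sub>v Uw s i \<in> carrier_vec n" using reach_c[of i] Uw_c[of s i] by auto
    show ?thesis unfolding Suc using mult_add_distrib_mat_vec[OF A c1 c2] by simp
  qed
  also have "A *\<^sub>v (A ^\<^sub>m i *\<^sub>v X s) = A ^\<^sub>m Suc i *\<^sub>v X s"
    unfolding pow_mat_Suc_left[OF A] by (rule assoc_mult_mat_vec[symmetric, OF A pow_carrier_mat[OF A] Xc])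
  also have "A *\<^sub>v (reach_mat m A B i *\<^sub>v Uw s i) = (A * reach_mat m A B i) *\<^sub>v Uw s i"
    by (rule assoc_mult_mat_vec[symmetric, OF A reach_c Uw_c])
  finally have e: "X (s + Suc i) = A ^\<^sub>m Suc i *\<^sub>v X s + (A * reach_mat m A B i) *\<^sub>v Uw s i + B *\<^sub>v u (s+i)" .
  have c1: "A ^\<^sub>m Suc i *\<^sub>v X s \<in> carrier_vec n" by (intro mult_mat_vec_carrier[OF pow_carrier_mat[OF A]] Xc)
  have c2: "(A * reach_mat m A B i) *\<^sub>v Uw s i \<in> carrier_vec n"
    by (intro mult_mat_vec_carrier[OF mult_carrier_mat[OF A reach_c]] Uw_c)
  have c3: "B *\<^sub>v u (s+i) \<in> carrier_vec n" by (intro mult_mat_vec_carrier[OF B] uc)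
  show ?case unfolding e reach_Suc by (rule assoc_add_vec[OF c1 c2 c3])
qed

end


lemma mat_vec_entry_sum:
  "M \<in> carrier_mat a b \<Longrightarrow> v \<in> carrier_vec b \<Longrightarrow> i < a \<Longrightarrow> (M *\<^sub>v v) $ i = (\<Sum>c = 0..<b. M $$ (i,c) * v $ c)"
  by (auto simp: scalar_prod_def intro!: sum.cong)

context traj begin

definition "Yw s i = vec (p*i) (\<lambda>r. y (s + r div p) $ (r mod p))"

lemma Yw_c: "Yw s i \<in> carrier_vec (p*i)" unfolding Yw_def by auto

lemma obs_c: "obs_mat p A C i \<in> carrier_mat (p*i) n" unfolding obs_mat_def using A by auto
lemma toep_c: "toep_mat p m A B C i \<in> carrier_mat (p*i) (m*i)" unfolding toep_mat_def by auto

lemma obsY: "Yw s i = obs_mat p A C i *\<^sub>v X s + toep_mat p m A B C i *\<^sub>v Uw s i"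
proof (rule eq_vecI)
  show "dim_vec (Yw s i) = dim_vec (obs_mat p A C i *\<^sub>v X s + toep_mat p m A B C i *\<^sub>v Uw s i)"
    using obs_c[of i] toep_c[of i] Yw_c[of s i] by simp
  fix r assume "r < dim_vec (obs_mat p A C i *\<^sub>v X s + toep_mat p m A B C i *\<^sub>v Uw s i)"
  hence r: "r < p*i" using obs_c[of i] toep_c[of i] by simp
  define j where "j = r div p"
  define q where "q = r mod p"
  have p0: "p > 0" using r by (cases p) auto
  have j: "j < i" unfolding j_def using r p0 by (simp add: div_less_iff_less_mult mult.commute)
  have q: "q < p" unfolding q_def using p0 by simp
  have Apc: "A ^\<^sub>m j \<in> carrier_mat n n" using A by auto
  have "Yw s i $ r = (C *\<^sub>v X (s+j)) $ q" using r by (simp add: Yw_def y_def j_def q_def)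
  also have "\<dots> = (C *\<^sub>v (A ^\<^sub>m j *\<^sub>v X s)) $ q + (C *\<^sub>v (reach_mat m A B j *\<^sub>v Uw s j)) $ q"
  proof -
    have c1: "A ^\<^sub>m j *\<^sub>v X s \<in> carrier_vec n" by (intro mult_mat_vec_carrier[OF Apc] Xc)
    have c2: "reach_mat m A B j *\<^sub>v Uw s j \<in> carrier_vec n" by (intro mult_mat_vec_carrier[OF reach_c] Uw_c)
    show ?thesis unfolding trajX mult_add_distrib_mat_vec[OF C c1 c2] using q C by simp
  qed
  also have "(C *\<^sub>v (A ^\<^sub>m j *\<^sub>v X s)) $ q = (obs_mat p A C i *\<^sub>v X s) $ r"
  proof -
    have "C *\<^sub>v (A ^\<^sub>m j *\<^sub>v X s) = (C * A ^\<^sub>m j) *\<^sub>v X s"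
      by (rule assoc_mult_mat_vec[symmetric, OF C Apc Xc])
    also have "\<dots> $ q = (\<Sum>b = 0..<n. (C * A ^\<^sub>m j) $$ (q,b) * X s $ b)"
      by (rule mat_vec_entry_sum[OF mult_carrier_mat[OF C Apc] Xc q])
    also have "\<dots> = (obs_mat p A C i *\<^sub>v X s) $ r"
      unfolding mat_vec_entry_sum[OF obs_c Xc r] 
      using r A by (intro sum.cong refl) (simp add: obs_mat_def j_def q_def del: index_mult_mat)
    finally show ?thesis .
  qed
  also have "(C *\<^sub>v (reach_mat m A B j *\<^sub>v Uw s j)) $ q = (toep_mat p m A B C i *\<^sub>v Uw s i) $ r"
  proof -
    have "C *\<^sub>v (reach_mat m A B j *\<^sub>v Uw s j) = (C * reach_mat m A B j) *\<^sub>v Uw s j"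
      by (rule assoc_mult_mat_vec[symmetric, OF C reach_c Uw_c])
    also have "\<dots> $ q = (\<Sum>c = 0..<m*j. (C * reach_mat m A B j) $$ (q,c) * Uw s j $ c)"
      by (rule mat_vec_entry_sum[OF mult_carrier_mat[OF C reach_c] Uw_c q])
    also have "\<dots> = (\<Sum>c = 0..<m*j. (C * A ^\<^sub>m (j - c div m - 1) * B) $$ (q, c mod m) * u (s + c div m) $ (c mod m))"
    proof (intro sum.cong refl)
      fix c assume c: "c \<in> {0..<m*j}"
      hence m0: "m > 0" by (cases m) auto
      have cm: "c mod m < m" using m0 by simp
      have "(C * reach_mat m A B j) $$ (q,c) = (C * (A ^\<^sub>m (j - 1 - c div m) * B)) $$ (q, c mod m)"
        using q c C A B cm by (simp add: reach_mat_def scalar_prod_def col_def)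
      also have "C * (A ^\<^sub>m (j - 1 - c div m) * B) = C * A ^\<^sub>m (j - c div m - 1) * B"
        using C A B by (subst assoc_mult_mat[symmetric, of _ p n _ n _ m]) (auto simp: diff_commute)
      finally show "(C * reach_mat m A B j) $$ (q,c) * Uw s j $ c =
         (C * A ^\<^sub>m (j - c div m - 1) * B) $$ (q, c mod m) * u (s + c div m) $ (c mod m)"
        using c by (simp add: Uw_def)
    qed
    also have "\<dots> = (\<Sum>c = 0..<m*i. toep_mat p m A B C i $$ (r,c) * Uw s i $ c)"
    proof -
      let ?f = "\<lambda>c. toep_mat p m A B C i $$ (r,c) * Uw s i $ c"
      have mj: "m*j \<le> m*i" using j by simp
      hence mj': "\<And>c. c < m*j \<Longrightarrow> c < m*i" by (rule order_less_le_trans[rotated])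
      have "(\<Sum>c = 0..<m*i. ?f c) = (\<Sum>c = 0..<m*j. ?f c) + (\<Sum>c = m*j..<m*i. ?f c)"
        by (rule sum.atLeastLessThan_concat[symmetric]) (use mj in auto)
      also have "(\<Sum>c = m*j..<m*i. ?f c) = 0"
      proof (intro sum.neutral ballI)
        fix c assume c: "c \<in> {m*j..<m*i}"
        hence m0: "m > 0" by (cases m) auto
        have "j \<le> c div m" using c m0 by (simp add: less_eq_div_iff_mult_less_eq mult.commute)
        thus "?f c = 0" using c r by (simp add: toep_mat_def j_def)
      qed
      also have "(\<Sum>c = 0..<m*j. ?f c) = (\<Sum>c = 0..<m*j. (C * A ^\<^sub>m (j - c div m - 1) * B) $$ (q, c mod m) * u (s + c div m) $ (c mod m))"
      proof (intro sum.cong refl)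
        fix c assume c: "c \<in> {0..<m*j}"
        hence m0: "m > 0" by (cases m) auto
        have "c div m < j" using c m0 by (simp add: div_less_iff_less_mult mult.commute)
        moreover have "c < m * i" using c mj' by simp
        ultimately show "?f c = (C * A ^\<^sub>m (j - c div m - 1) * B) $$ (q, c mod m) * u (s + c div m) $ (c mod m)"
          using r by (simp add: toep_mat_def Uw_def j_def q_def)
      qed
      finally show ?thesis by simp
    qed
    also have "\<dots> = (toep_mat p m A B C i *\<^sub>v Uw s i) $ r"
      by (rule mat_vec_entry_sum[OF toep_c Uw_c r, symmetric])
    finally show ?thesis .
  qed
  finally show "Yw s i $ r = (obs_mat p A C i *\<^sub>v X s + toep_mat p m A B C i *\<^sub>v Uw s i) $ r"
    using r obs_c[of i] toep_c[of i] by simp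
qed

end


lemma append_vec_empty: "w \<in> carrier_vec 0 \<Longrightarrow> v @\<^sub>v w = v"
  by (intro eq_vecI) (auto simp: append_vec_def Let_def)

locale traj_obs = traj +
  fixes OL :: "real mat"
  assumes OL: "OL \<in> carrier_mat n (p*l)" and OLinv: "OL * obs_mat p A C l = 1\<^sub>m n"
begin

abbreviation "N \<equiv> p*l+m*l"
definition "R = reach_mat m A B l"
definition "T = toep_mat p m A B C l"
definition "Gm = four_block_mat (A ^\<^sub>m l * OL) (R - A ^\<^sub>m l * OL * T) (0\<^sub>m 0 (p*l)) (0\<^sub>m 0 (m*l))"

lemma R_c: "R \<in> carrier_mat n (m*l)" unfolding R_def by (rule reach_c)
lemma T_c: "T \<in> carrier_mat (p*l) (m*l)" unfolding T_def by (rule toep_c)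
lemma Al_c: "A ^\<^sub>m l \<in> carrier_mat n n" using A by auto
lemma G_c: "Gm \<in> carrier_mat n N"
proof -
  have "Gm \<in> carrier_mat (n + 0) (p*l + m*l)" unfolding Gm_def
    by (rule four_block_carrier_mat) (use Al_c OL in auto)
  thus ?thesis by simp
qed
lemma Z_c: "Z_mat p m A B C OL l \<in> carrier_mat p N"
proof -
  have "Z_mat p m A B C OL l \<in> carrier_mat (p + 0) (p*l + m*l)" unfolding Z_mat_def
    by (rule four_block_carrier_mat) (use Al_c OL C in auto)
  thus ?thesis by simp
qed

lemma Hwin: assumes k: "l \<le> k" shows "H k = Yw (k-l) l @\<^sub>v Uw (k-l) l"
proof (rule eq_vecI)
  show "dim_vec (H k) = dim_vec (Yw (k-l) l @\<^sub>v Uw (k-l) l)" using Hc[of k] Yw_c[of "k-l" l] Uw_c[of "k-l" l] by simp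
  fix i assume "i < dim_vec (Yw (k-l) l @\<^sub>v Uw (k-l) l)"
  hence i: "i < p*l + m*l" using Yw_c[of "k-l" l] Uw_c[of "k-l" l] by simp
  show "H k $ i = (Yw (k-l) l @\<^sub>v Uw (k-l) l) $ i"
  proof (cases "i < p*l")
    case True
    have "H k $ i = y (k + i div p - l) $ (i mod p)" using True k by (intro winY) auto
    also have "k + i div p - l = k - l + i div p" using k by simp
    finally show ?thesis using True Yw_c[of "k-l" l] Uw_c[of "k-l" l] by (simp add: Yw_def)
  next
    case False
    define r where "r = i - p*l"
    have r: "r < m*l" "i = p*l + r" using False i by (auto simp: r_def)
    have "H k $ i = u (k + r div m - l) $ (r mod m)" unfolding r(2) using r k by (intro winU) auto
    also have "k + r div m - l = k - l + r div m" using k by simp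
    finally show ?thesis using False r Yw_c[of "k-l" l] Uw_c[of "k-l" l] by (simp add: Uw_def)
  qed
qed

lemma Xk: assumes k: "l \<le> k"
  shows "X k = Gm *\<^sub>v H k" and "C *\<^sub>v X k = Z_mat p m A B C OL l *\<^sub>v H k"
proof -
  define s where "s = k - l"
  define Y where "Y = Yw s l"
  define U where "U = Uw s l"
  have Yc: "Y \<in> carrier_vec (p*l)" unfolding Y_def by (rule Yw_c)
  have Uc: "U \<in> carrier_vec (m*l)" unfolding U_def by (rule Uw_c)
  have Hk: "H k = Y @\<^sub>v U" unfolding Y_def U_def s_def by (rule Hwin[OF k])
  have Oc: "obs_mat p A C l \<in> carrier_mat (p*l) n" by (rule obs_c)
  have TUc: "T *\<^sub>v U \<in> carrier_vec (p*l)" using T_c Uc by auto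
  have OX: "obs_mat p A C l *\<^sub>v X s = Y - T *\<^sub>v U"
  proof -
    have e: "Y = obs_mat p A C l *\<^sub>v X s + T *\<^sub>v U" unfolding Y_def U_def T_def by (rule obsY)
    show ?thesis
    proof (rule eq_vecI)
      have OXc: "obs_mat p A C l *\<^sub>v X s \<in> carrier_vec (p*l)" using Oc Xc[of s] by simp
      show "dim_vec (obs_mat p A C l *\<^sub>v X s) = dim_vec (Y - T *\<^sub>v U)" using OXc Yc TUc Oc T_c by simp
      fix i assume "i < dim_vec (Y - T *\<^sub>v U)"
      hence i: "i < p*l" using TUc T_c by simp
      have "Y $ i = (obs_mat p A C l *\<^sub>v X s) $ i + (T *\<^sub>v U) $ i"
        using i OXc TUc T_c by (subst e) simp
      thus "(obs_mat p A C l *\<^sub>v X s) $ i = (Y - T *\<^sub>v U) $ i" using i TUc T_c by simp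
    qed
  qed
  have Xs_eq: "X s = OL *\<^sub>v (Y - T *\<^sub>v U)"
  proof -
    have "X s = (OL * obs_mat p A C l) *\<^sub>v X s" using OLinv Xc[of s] by simp
    also have "\<dots> = OL *\<^sub>v (obs_mat p A C l *\<^sub>v X s)" by (rule assoc_mult_mat_vec[OF OL Oc Xc])
    finally show ?thesis unfolding OX .
  qed
  define a1 where "a1 = A ^\<^sub>m l *\<^sub>v (OL *\<^sub>v Y)"
  define a2 where "a2 = A ^\<^sub>m l *\<^sub>v (OL *\<^sub>v (T *\<^sub>v U))"
  define a3 where "a3 = R *\<^sub>v U"
  have a1c: "a1 \<in> carrier_vec n" unfolding a1_def using Al_c OL Yc by auto
  have a2c: "a2 \<in> carrier_vec n" unfolding a2_def using Al_c OL TUc by auto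
  have a3c: "a3 \<in> carrier_vec n" unfolding a3_def using R_c Uc by auto
  have OLYc: "OL *\<^sub>v Y \<in> carrier_vec n" using OL Yc by auto
  have OLTUc: "OL *\<^sub>v (T *\<^sub>v U) \<in> carrier_vec n" using OL TUc by auto
  have Xk_eq: "X k = a1 - a2 + a3"
  proof -
    have "X k = X (s + l)" using k by (simp add: s_def)
    also have "\<dots> = A ^\<^sub>m l *\<^sub>v X s + a3" unfolding trajX a3_def R_def U_def ..
    also have "A ^\<^sub>m l *\<^sub>v X s = a1 - a2" unfolding Xs_eq a1_def a2_def
      mult_minus_distrib_mat_vec[OF OL Yc TUc] by (rule mult_minus_distrib_mat_vec[OF Al_c OLYc OLTUc])
    finally show ?thesis .
  qed
  have G1: "(A ^\<^sub>m l * OL) *\<^sub>v Y = a1" unfolding a1_def by (rule assoc_mult_mat_vec[OF Al_c OL Yc])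
  have G2: "(A ^\<^sub>m l * OL * T) *\<^sub>v U = a2"
  proof -
    have "(A ^\<^sub>m l * OL * T) *\<^sub>v U = (A ^\<^sub>m l * OL) *\<^sub>v (T *\<^sub>v U)"
      by (rule assoc_mult_mat_vec[OF mult_carrier_mat[OF Al_c OL] T_c Uc])
    also have "\<dots> = a2" unfolding a2_def by (rule assoc_mult_mat_vec[OF Al_c OL TUc])
    finally show ?thesis .
  qed
  have RAc: "R - A ^\<^sub>m l * OL * T \<in> carrier_mat n (m*l)"
    by (rule minus_carrier_mat[OF mult_carrier_mat[OF mult_carrier_mat[OF Al_c OL] T_c]])
  have RCc: "C * R - C * A ^\<^sub>m l * OL * T \<in> carrier_mat p (m*l)"
    by (rule minus_carrier_mat[OF mult_carrier_mat[OF mult_carrier_mat[OF mult_carrier_mat[OF C Al_c] OL] T_c]])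
  have "Gm *\<^sub>v H k = ((A ^\<^sub>m l * OL) *\<^sub>v Y + (R - A ^\<^sub>m l * OL * T) *\<^sub>v U) @\<^sub>v
      (0\<^sub>m 0 (p*l) *\<^sub>v Y + 0\<^sub>m 0 (m*l) *\<^sub>v U)"
    unfolding Hk Gm_def
    by (rule four_block_mat_mult_vec[OF mult_carrier_mat[OF Al_c OL] RAc zero_carrier_mat zero_carrier_mat Yc Uc])
  also have "\<dots> = (A ^\<^sub>m l * OL) *\<^sub>v Y + (R - A ^\<^sub>m l * OL * T) *\<^sub>v U"
    by (rule append_vec_empty[OF add_carrier_vec[OF mult_mat_vec_carrier[OF zero_carrier_mat Yc] mult_mat_vec_carrier[OF zero_carrier_mat Uc]]])
  also have "(R - A ^\<^sub>m l * OL * T) *\<^sub>v U = a3 - a2"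
    unfolding a3_def G2[symmetric]
    by (rule minus_mult_distrib_mat_vec[OF R_c mult_carrier_mat[OF mult_carrier_mat[OF Al_c OL] T_c] Uc])
  finally have GH: "Gm *\<^sub>v H k = a1 + (a3 - a2)" unfolding G1 .
  show "X k = Gm *\<^sub>v H k" unfolding GH Xk_eq
    by (rule eq_vecI) (use a1c a2c a3c in auto)
  have Z1: "(C * A ^\<^sub>m l * OL) *\<^sub>v Y = C *\<^sub>v a1"
  proof -
    have "(C * A ^\<^sub>m l * OL) *\<^sub>v Y = (C * A ^\<^sub>m l) *\<^sub>v (OL *\<^sub>v Y)"
      by (rule assoc_mult_mat_vec[OF mult_carrier_mat[OF C Al_c] OL Yc])
    also have "\<dots> = C *\<^sub>v a1" unfolding a1_def by (rule assoc_mult_mat_vec[OF C Al_c OLYc])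
    finally show ?thesis .
  qed
  have Z2: "(C * A ^\<^sub>m l * OL * T) *\<^sub>v U = C *\<^sub>v a2"
  proof -
    have "(C * A ^\<^sub>m l * OL * T) *\<^sub>v U = (C * A ^\<^sub>m l * OL) *\<^sub>v (T *\<^sub>v U)"
      by (rule assoc_mult_mat_vec[OF mult_carrier_mat[OF mult_carrier_mat[OF C Al_c] OL] T_c Uc])
    also have "\<dots> = (C * A ^\<^sub>m l) *\<^sub>v (OL *\<^sub>v (T *\<^sub>v U))"
      by (rule assoc_mult_mat_vec[OF mult_carrier_mat[OF C Al_c] OL TUc])
    also have "\<dots> = C *\<^sub>v a2" unfolding a2_def by (rule assoc_mult_mat_vec[OF C Al_c OLTUc])
    finally show ?thesis .
  qed
  have Z3: "(C * R) *\<^sub>v U = C *\<^sub>v a3" unfolding a3_def by (rule assoc_mult_mat_vec[OF C R_c Uc])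
  have "Z_mat p m A B C OL l *\<^sub>v H k = ((C * A ^\<^sub>m l * OL) *\<^sub>v Y + (C * R - C * A ^\<^sub>m l * OL * T) *\<^sub>v U) @\<^sub>v
      (0\<^sub>m 0 (p*l) *\<^sub>v Y + 0\<^sub>m 0 (m*l) *\<^sub>v U)"
    unfolding Hk Z_mat_def R_def[symmetric] T_def[symmetric]
    by (rule four_block_mat_mult_vec[OF mult_carrier_mat[OF mult_carrier_mat[OF C Al_c] OL] RCc zero_carrier_mat zero_carrier_mat Yc Uc])
  also have "\<dots> = (C * A ^\<^sub>m l * OL) *\<^sub>v Y + (C * R - C * A ^\<^sub>m l * OL * T) *\<^sub>v U"
    by (rule append_vec_empty[OF add_carrier_vec[OF mult_mat_vec_carrier[OF zero_carrier_mat Yc] mult_mat_vec_carrier[OF zero_carrier_mat Uc]]])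
  also have "(C * R - C * A ^\<^sub>m l * OL * T) *\<^sub>v U = C *\<^sub>v a3 - C *\<^sub>v a2"
    unfolding Z3[symmetric] Z2[symmetric]
    by (rule minus_mult_distrib_mat_vec[OF mult_carrier_mat[OF C R_c] mult_carrier_mat[OF mult_carrier_mat[OF mult_carrier_mat[OF C Al_c] OL] T_c] Uc])
  finally have ZH: "Z_mat p m A B C OL l *\<^sub>v H k = C *\<^sub>v a1 + (C *\<^sub>v a3 - C *\<^sub>v a2)" unfolding Z1 .
  have "C *\<^sub>v X k = C *\<^sub>v a1 - C *\<^sub>v a2 + C *\<^sub>v a3"
  proof -
    have a12: "a1 - a2 \<in> carrier_vec n" using a1c a2c by simp
    show ?thesis unfolding Xk_eq mult_add_distrib_mat_vec[OF C a12 a3c] mult_minus_distrib_mat_vec[OF C a1c a2c] ..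
  qed
  thus "C *\<^sub>v X k = Z_mat p m A B C OL l *\<^sub>v H k" unfolding ZH
    by (intro eq_vecI) (use C a1c a2c a3c in auto)
qed

definition "Mcl = F_mat p m l + L_mat p m l * Z_mat p m A B C OL l + Bl_mat p m l * K"

lemma F_c: "F_mat p m l \<in> carrier_mat N N" unfolding F_mat_def shift_mat_def
  by (rule four_block_carrier_mat) auto
lemma L_c: "L_mat p m l \<in> carrier_mat N p" unfolding L_mat_def by auto
lemma Bl_c: "Bl_mat p m l \<in> carrier_mat N m" unfolding Bl_mat_def by auto
lemma Mcl_c: "Mcl \<in> carrier_mat N N" unfolding Mcl_def using F_c L_c Bl_c Z_c K by auto

lemma H_step: assumes k: "l \<le> k" shows "H (Suc k) = Mcl *\<^sub>v H k"
proof -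
  have LZ: "L_mat p m l * Z_mat p m A B C OL l \<in> carrier_mat N N" using L_c Z_c by auto
  have BK: "Bl_mat p m l * K \<in> carrier_mat N N" using Bl_c K by auto
  have "H (Suc k) = F_mat p m l *\<^sub>v H k + L_mat p m l *\<^sub>v (Z_mat p m A B C OL l *\<^sub>v H k) + Bl_mat p m l *\<^sub>v (K *\<^sub>v H k)"
    unfolding Hs Xk(2)[OF k] ..
  also have "L_mat p m l *\<^sub>v (Z_mat p m A B C OL l *\<^sub>v H k) = (L_mat p m l * Z_mat p m A B C OL l) *\<^sub>v H k"
    by (rule assoc_mult_mat_vec[symmetric, OF L_c Z_c Hc])
  also have "Bl_mat p m l *\<^sub>v (K *\<^sub>v H k) = (Bl_mat p m l * K) *\<^sub>v H k"
    by (rule assoc_mult_mat_vec[symmetric, OF Bl_c K Hc])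
  also have "F_mat p m l *\<^sub>v H k + (L_mat p m l * Z_mat p m A B C OL l) *\<^sub>v H k = (F_mat p m l + L_mat p m l * Z_mat p m A B C OL l) *\<^sub>v H k"
    by (rule add_mult_distrib_mat_vec[symmetric, OF F_c LZ Hc])
  also have "\<dots> + (Bl_mat p m l * K) *\<^sub>v H k = Mcl *\<^sub>v H k" unfolding Mcl_def
    by (rule add_mult_distrib_mat_vec[symmetric, OF _ BK Hc]) (use F_c LZ in auto)
  finally show ?thesis .
qed

lemma H_pow: assumes k: "l \<le> k" shows "H (k + j) = Mcl ^\<^sub>m j *\<^sub>v H k"
  using k
proof (induct j arbitrary: k)
  case 0 then show ?case using Hc[of k] Mcl_c by simp
next
  case (Suc j)
  have "H (k + Suc j) = H (Suc k + j)" by simp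
  also have "\<dots> = Mcl ^\<^sub>m j *\<^sub>v H (Suc k)" using Suc(1)[of "Suc k"] Suc(2) by simp
  also have "\<dots> = Mcl ^\<^sub>m j *\<^sub>v (Mcl *\<^sub>v H k)" using H_step[OF Suc(2)] by simp
  also have "\<dots> = (Mcl ^\<^sub>m j * Mcl) *\<^sub>v H k"
    by (rule assoc_mult_mat_vec[symmetric, OF pow_carrier_mat[OF Mcl_c] Mcl_c Hc])
  finally show ?case by simp
qed

end


lemma pow_vec_decay:
  assumes M: "M \<in> carrier_mat N N" and S: "schur M"
  shows "\<exists>c r. c \<ge> 0 \<and> 0 < r \<and> r < 1 \<and> (\<forall>j. \<forall>v \<in> carrier_vec N. vnorm (M ^\<^sub>m j *\<^sub>v v) \<le> c * r ^ j * vnorm v)"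
proof -
  obtain c r where r: "0 < r" "r < 1" and c: "\<And>k i j. i < N \<Longrightarrow> j < N \<Longrightarrow> \<bar>(M ^\<^sub>m k) $$ (i,j)\<bar> \<le> c * r ^ k"
    using schur_decay[OF M S] by blast
  define c' where "c' = max c 0"
  have c'0: "c' \<ge> 0" unfolding c'_def by simp
  show ?thesis
  proof (rule exI[of _ "real N * real N * c'"], rule exI[of _ r], intro conjI allI ballI r)
    show "0 \<le> real N * real N * c'" using c'0 by simp
    fix j and v :: "real vec" assume v: "v \<in> carrier_vec N"
    have Mj: "M ^\<^sub>m j \<in> carrier_mat N N" using M by auto
    have cb: "\<bar>(M ^\<^sub>m j) $$ (a,b)\<bar> \<le> c' * r ^ j" if "a < N" "b < N" for a b
    proof -
      have "c * r ^ j \<le> c' * r ^ j" unfolding c'_def using r by (intro mult_right_mono) auto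
      thus ?thesis using c[OF that, of j] by linarith
    qed
    have nn: "c' * r ^ j \<ge> 0" using c'0 r by simp
    have e: "\<bar>(M ^\<^sub>m j *\<^sub>v v) $ i\<bar> \<le> real N * (c' * r ^ j) * vnorm v" if "i < N" for i
      by (rule mat_vec_entry[OF Mj cb v that nn])
    have nn2: "real N * (c' * r ^ j) * vnorm v \<ge> 0" using nn vnorm_nonneg[of v] by simp
    have "vnorm (M ^\<^sub>m j *\<^sub>v v) \<le> real N * (real N * (c' * r ^ j) * vnorm v)"
      by (rule vnorm_le_bound[OF _ e nn2]) (use Mj v in auto)
    thus "vnorm (M ^\<^sub>m j *\<^sub>v v) \<le> real N * real N * c' * r ^ j * vnorm v"
      by (simp add: algebra_simps)
  qed
qed

lemma sum3_entry_bound: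
  fixes w a b c :: "real vec"
  assumes "w = a + b + c" "a \<in> carrier_vec d" "b \<in> carrier_vec d" "c \<in> carrier_vec d"
    "\<And>i. i < d \<Longrightarrow> \<bar>a $ i\<bar> \<le> ca" "\<And>i. i < d \<Longrightarrow> \<bar>b $ i\<bar> \<le> cb" "\<And>i. i < d \<Longrightarrow> \<bar>c $ i\<bar> \<le> cc"
    "i < d"
  shows "\<bar>w $ i\<bar> \<le> ca + cb + cc"
proof -
  have "w $ i = a $ i + b $ i + c $ i" using assms(1-4,8) by simp
  thus ?thesis using assms(5)[OF assms(8)] assms(6)[OF assms(8)] assms(7)[OF assms(8)] by linarith
qed


lemma bnd_helper:
  fixes v :: "real vec"
  assumes "\<forall>i<d. \<bar>v $ i\<bar> \<le> c * a" "i < d" "a \<le> P" "c \<ge> 0"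
  shows "\<bar>v $ i\<bar> \<le> c * P"
proof -
  have "\<bar>v $ i\<bar> \<le> c * a" using assms(1,2) by blast
  also have "\<dots> \<le> c * P" by (rule mult_left_mono[OF assms(3,4)])
  finally show ?thesis .
qed

lemma main_gen:
  fixes A B C OL K :: "real mat" and n m p l :: nat
  assumes A: "A \<in> carrier_mat n n" and B: "B \<in> carrier_mat n m" and C: "C \<in> carrier_mat p n"
    and OL: "OL \<in> carrier_mat n (p * l)"
    and OLinv: "OL * obs_mat p A C l = 1\<^sub>m n"
    and K: "K \<in> carrier_mat m (p * l + m * l)"
    and S: "schur (F_mat p m l + L_mat p m l * Z_mat p m A B C OL l + Bl_mat p m l * K)"
  shows "gas (closed_loop A B C (F_mat p m l) (L_mat p m l) (Bl_mat p m l) K)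
             (carrier_vec n \<times> carrier_vec (p * l + m * l)) pair_norm (0\<^sub>v n, 0\<^sub>v (p * l + m * l))"
proof -
  define N where "N = p * l + m * l"
  define F where "F = F_mat p m l"
  define L where "L = L_mat p m l"
  define Bl where "Bl = Bl_mat p m l"
  define f where "f = closed_loop A B C F L Bl K"
  define SS where "SS = (carrier_vec n \<times> carrier_vec N :: (real vec \<times> real vec) set)"
  have Fc: "F \<in> carrier_mat N N" unfolding F_def F_mat_def shift_mat_def N_def
    by (rule four_block_carrier_mat) auto
  have Lc: "L \<in> carrier_mat N p" unfolding L_def L_mat_def N_def by auto
  have Blc: "Bl \<in> carrier_mat N m" unfolding Bl_def Bl_mat_def N_def by auto
  have Kc: "K \<in> carrier_mat m N" using K unfolding N_def .
  have Zc: "Z_mat p m A B C OL l \<in> carrier_mat p N"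
  proof -
    have "Z_mat p m A B C OL l \<in> carrier_mat (p + 0) (p*l + m*l)" unfolding Z_mat_def
      by (rule four_block_carrier_mat) (use A OL C in auto)
    thus ?thesis by (simp add: N_def)
  qed
  have f_eq: "f (x,h) = (A *\<^sub>v x + B *\<^sub>v (K *\<^sub>v h), F *\<^sub>v h + L *\<^sub>v (C *\<^sub>v x) + Bl *\<^sub>v (K *\<^sub>v h))" for x h
    by (simp add: f_def closed_loop_def Let_def)
  have f_S: "f z \<in> SS" if "z \<in> SS" for z
  proof -
    obtain x h where z: "z = (x,h)" by (cases z)
    have "x \<in> carrier_vec n" "h \<in> carrier_vec N" using that z SS_def by auto
    thus ?thesis unfolding z f_eq SS_def using A B C Kc Fc Lc Blc by auto
  qed
  have fk_S: "(f ^^ k) z \<in> SS" if "z \<in> SS" for k z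
    by (induct k) (use that f_S in auto)
  obtain cA where cA: "cA \<ge> 0" "\<And>v. v \<in> carrier_vec n \<Longrightarrow> (\<forall>i<n. \<bar>(A *\<^sub>v v) $ i\<bar> \<le> cA * vnorm v)"
    using mat_vec_bound[OF A] by blast
  obtain cBK where cBK: "cBK \<ge> 0" "\<And>v. v \<in> carrier_vec N \<Longrightarrow> (\<forall>i<n. \<bar>((B * K) *\<^sub>v v) $ i\<bar> \<le> cBK * vnorm v)"
    using mat_vec_bound[OF mult_carrier_mat[OF B Kc]] by blast
  obtain cF where cF: "cF \<ge> 0" "\<And>v. v \<in> carrier_vec N \<Longrightarrow> (\<forall>i<N. \<bar>(F *\<^sub>v v) $ i\<bar> \<le> cF * vnorm v)"
    using mat_vec_bound[OF Fc] by blast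
  obtain cLC where cLC: "cLC \<ge> 0" "\<And>v. v \<in> carrier_vec n \<Longrightarrow> (\<forall>i<N. \<bar>((L * C) *\<^sub>v v) $ i\<bar> \<le> cLC * vnorm v)"
    using mat_vec_bound[OF mult_carrier_mat[OF Lc C]] by blast
  obtain cBlK where cBlK: "cBlK \<ge> 0" "\<And>v. v \<in> carrier_vec N \<Longrightarrow> (\<forall>i<N. \<bar>((Bl * K) *\<^sub>v v) $ i\<bar> \<le> cBlK * vnorm v)"
    using mat_vec_bound[OF mult_carrier_mat[OF Blc Kc]] by blast
  define c0 where "c0 = real n * (cA + cBK) + real N * (cF + cLC + cBlK)"
  have c0: "c0 \<ge> 0" unfolding c0_def using cA cBK cF cLC cBlK by simp
  have step: "pair_norm (f z) \<le> c0 * pair_norm z" if z: "z \<in> SS" for z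
  proof -
    obtain x h where zz: "z = (x,h)" by (cases z)
    have x: "x \<in> carrier_vec n" and h: "h \<in> carrier_vec N" using z zz SS_def by auto
    define P where "P = pair_norm z"
    have xP: "vnorm x \<le> P" unfolding P_def using pair_norm_fst[of z] zz by simp
    have hP: "vnorm h \<le> P" unfolding P_def using pair_norm_snd[of z] zz by simp
    have P0: "P \<ge> 0" unfolding P_def by (rule pair_norm_nonneg)
    define x' where "x' = A *\<^sub>v x + (B * K) *\<^sub>v h"
    define h' where "h' = F *\<^sub>v h + (L * C) *\<^sub>v x + (Bl * K) *\<^sub>v h"
    have fz: "f z = (x', h')" unfolding zz f_eq x'_def h'_def
      using assoc_mult_mat_vec[OF B Kc h] assoc_mult_mat_vec[OF Lc C x] assoc_mult_mat_vec[OF Blc Kc h] by simp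
    have x'c: "x' \<in> carrier_vec n" unfolding x'_def using A B Kc x h by auto
    have h'c: "h' \<in> carrier_vec N" unfolding h'_def using Fc Lc C Blc Kc x h by auto
    have ex': "\<bar>x' $ i\<bar> \<le> (cA + cBK) * P" if i: "i < n" for i
    proof -
      have "x' $ i = (A *\<^sub>v x) $ i + ((B * K) *\<^sub>v h) $ i" unfolding x'_def using i B Kc by simp
      moreover have "\<bar>(A *\<^sub>v x) $ i\<bar> \<le> cA * P" by (rule bnd_helper[OF cA(2)[OF x] i xP cA(1)])
      moreover have "\<bar>((B * K) *\<^sub>v h) $ i\<bar> \<le> cBK * P" by (rule bnd_helper[OF cBK(2)[OF h] i hP cBK(1)])
      ultimately show ?thesis by (simp add: algebra_simps)
    qed
    have eh': "\<bar>h' $ i\<bar> \<le> (cF + cLC + cBlK) * P" if i: "i < N" for i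
    proof -
      have "\<bar>h' $ i\<bar> \<le> cF * P + cLC * P + cBlK * P"
      proof (rule sum3_entry_bound[OF h'_def _ _ _ _ _ _ i])
        show "F *\<^sub>v h \<in> carrier_vec N" using Fc h by auto
        show "(L * C) *\<^sub>v x \<in> carrier_vec N" using Lc C x by auto
        show "(Bl * K) *\<^sub>v h \<in> carrier_vec N" using Blc Kc h by auto
        fix i assume i: "i < N"
        show "\<bar>(F *\<^sub>v h) $ i\<bar> \<le> cF * P" by (rule bnd_helper[OF cF(2)[OF h] i hP cF(1)])
        show "\<bar>((L * C) *\<^sub>v x) $ i\<bar> \<le> cLC * P" by (rule bnd_helper[OF cLC(2)[OF x] i xP cLC(1)])
        show "\<bar>((Bl * K) *\<^sub>v h) $ i\<bar> \<le> cBlK * P" by (rule bnd_helper[OF cBlK(2)[OF h] i hP cBlK(1)])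
      qed
      thus ?thesis by (simp add: algebra_simps)
    qed
    have nn1: "0 \<le> (cA + cBK) * P" by (intro mult_nonneg_nonneg add_nonneg_nonneg cA(1) cBK(1) P0)
    have nn2: "0 \<le> (cF + cLC + cBlK) * P" by (intro mult_nonneg_nonneg add_nonneg_nonneg cF(1) cLC(1) cBlK(1) P0)
    have "vnorm x' \<le> real n * ((cA + cBK) * P)"
      using vnorm_le_bound[OF x'c ex' nn1] by simp
    moreover have "vnorm h' \<le> real N * ((cF + cLC + cBlK) * P)"
      using vnorm_le_bound[OF h'c eh' nn2] by simp
    moreover have "pair_norm (f z) \<le> vnorm x' + vnorm h'" using pair_norm_le[of "f z"] fz by simp
    ultimately show ?thesis unfolding P_def[symmetric] c0_def by (simp add: algebra_simps)
  qed
  have iter: "pair_norm ((f ^^ k) z) \<le> c0 ^ k * pair_norm z" if z: "z \<in> SS" for k z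
  proof (induct k)
    case 0 then show ?case by simp
  next
    case (Suc k)
    have "pair_norm ((f ^^ Suc k) z) \<le> c0 * pair_norm ((f ^^ k) z)" using step[OF fk_S[OF z, of k]] by simp
    also have "\<dots> \<le> c0 * (c0 ^ k * pair_norm z)" using Suc c0 by (intro mult_left_mono) auto
    finally show ?case by (simp add: algebra_simps)
  qed
  define Mcl where "Mcl = F_mat p m l + L_mat p m l * Z_mat p m A B C OL l + Bl_mat p m l * K"
  have Mclc: "Mcl \<in> carrier_mat N N" unfolding Mcl_def F_def[symmetric] L_def[symmetric] Bl_def[symmetric]
    using Fc Lc Zc Blc Kc by auto
  obtain cM r where cM: "cM \<ge> 0" and r: "0 < r" "r < 1"
    and decay: "\<And>j v. v \<in> carrier_vec N \<Longrightarrow> vnorm (Mcl ^\<^sub>m j *\<^sub>v v) \<le> cM * r ^ j * vnorm v"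
    using pow_vec_decay[OF Mclc S[folded Mcl_def]] by blast
  define G0 where "G0 = four_block_mat (A ^\<^sub>m l * OL) (reach_mat m A B l - A ^\<^sub>m l * OL * toep_mat p m A B C l)
      (0\<^sub>m 0 (p*l)) (0\<^sub>m 0 (m*l))"
  have G0c: "G0 \<in> carrier_mat n N"
  proof -
    have "G0 \<in> carrier_mat (n + 0) (p*l + m*l)" unfolding G0_def
      by (rule four_block_carrier_mat) (use A OL in auto)
    thus ?thesis by (simp add: N_def)
  qed
  obtain cG where cG: "cG \<ge> 0" "\<And>v. v \<in> carrier_vec N \<Longrightarrow> vnorm (G0 *\<^sub>v v) \<le> cG * vnorm v"
    using mat_vec_bound[OF G0c] by blast
  define D where "D = (cG + 1) * cM * c0 ^ l"
  have D0: "D \<ge> 0" unfolding D_def using cG cM c0 by simp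
  have long: "pair_norm ((f ^^ k) z) \<le> D * r ^ (k - l) * pair_norm z" if z: "z \<in> SS" and k: "l \<le> k" for z k
  proof -
    define X where "X j = fst ((f ^^ j) z)" for j
    define H where "H j = snd ((f ^^ j) z)" for j
    have fj: "(f ^^ j) z = (X j, H j)" for j by (simp add: X_def H_def)
    have Xc: "X j \<in> carrier_vec n" for j using fk_S[OF z, of j] fj[of j] SS_def by auto
    have Hc: "H j \<in> carrier_vec N" for j using fk_S[OF z, of j] fj[of j] SS_def by auto
    interpret T: traj_obs n m p l A B C K X H OL
    proof (unfold_locales)
      show "A \<in> carrier_mat n n" "B \<in> carrier_mat n m" "C \<in> carrier_mat p n" by (fact A, fact B, fact C)
      show "K \<in> carrier_mat m (p * l + m * l)" by (fact K)
      show "X k \<in> carrier_vec n" for k by (fact Xc)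
      show "H k \<in> carrier_vec (p * l + m * l)" for k using Hc[of k] by (simp add: N_def)
      show "OL \<in> carrier_mat n (p * l)" by (fact OL)
      show "OL * obs_mat p A C l = 1\<^sub>m n" by (fact OLinv)
      fix k
      have "(X (Suc k), H (Suc k)) = f (X k, H k)" using fj[of "Suc k"] fj[of k] by simp
      thus "X (Suc k) = A *\<^sub>v X k + B *\<^sub>v (K *\<^sub>v H k)"
        "H (Suc k) = F_mat p m l *\<^sub>v H k + L_mat p m l *\<^sub>v (C *\<^sub>v X k) + Bl_mat p m l *\<^sub>v (K *\<^sub>v H k)"
        unfolding f_eq F_def L_def Bl_def by auto
    qed
    have TM: "T.Mcl = Mcl" unfolding T.Mcl_def Mcl_def ..
    have TG: "T.Gm = G0" unfolding T.Gm_def T.R_def T.T_def G0_def ..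
    have Hk: "H k = Mcl ^\<^sub>m (k - l) *\<^sub>v H l" using T.H_pow[of l "k - l"] k unfolding TM by simp
    have Xk: "X k = G0 *\<^sub>v H k" using T.Xk(1)[OF k] unfolding TG .
    have Hl: "vnorm (H l) \<le> c0 ^ l * pair_norm z"
      using iter[OF z, of l] pair_norm_snd[of "(f ^^ l) z"] fj[of l] by simp
    have "vnorm (H k) \<le> cM * r ^ (k - l) * vnorm (H l)" unfolding Hk by (rule decay[OF Hc])
    also have "\<dots> \<le> cM * r ^ (k - l) * (c0 ^ l * pair_norm z)"
      using Hl cM r by (intro mult_left_mono) auto
    finally have HkB: "vnorm (H k) \<le> cM * r ^ (k - l) * (c0 ^ l * pair_norm z)" .
    have "pair_norm ((f ^^ k) z) \<le> vnorm (X k) + vnorm (H k)" using pair_norm_le[of "(f ^^ k) z"] fj[of k] by simp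
    also have "\<dots> \<le> cG * vnorm (H k) + vnorm (H k)" unfolding Xk using cG(2)[OF Hc] by simp
    also have "\<dots> = (cG + 1) * vnorm (H k)" by (simp add: algebra_simps)
    also have "\<dots> \<le> (cG + 1) * (cM * r ^ (k - l) * (c0 ^ l * pair_norm z))"
      using HkB cG by (intro mult_left_mono) auto
    also have "\<dots> = D * r ^ (k - l) * pair_norm z" by (simp add: D_def algebra_simps)
    finally show ?thesis .
  qed
  define E where "E = max 1 c0 ^ l + D"
  have E0: "E \<ge> 0" unfolding E_def using D0 by simp
  have allb: "pair_norm ((f ^^ k) z) \<le> E * pair_norm z" if z: "z \<in> SS" for z k
  proof (cases "k < l")
    case True
    have "c0 ^ k \<le> max 1 c0 ^ k" using c0 by (intro power_mono) auto
    also have "\<dots> \<le> max 1 c0 ^ l" using True by (intro power_increasing) auto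
    also have "\<dots> \<le> E" unfolding E_def using D0 by simp
    finally have "c0 ^ k \<le> E" .
    hence "c0 ^ k * pair_norm z \<le> E * pair_norm z" by (rule mult_right_mono[OF _ pair_norm_nonneg])
    thus ?thesis using iter[OF z, of k] by linarith
  next
    case False
    have "r ^ (k - l) \<le> 1" using r by (intro power_le_one) auto
    hence "D * r ^ (k - l) \<le> D" using D0 by (simp add: mult_left_le)
    also have "\<dots> \<le> E" unfolding E_def by simp
    finally have "D * r ^ (k - l) \<le> E" .
    hence "D * r ^ (k - l) * pair_norm z \<le> E * pair_norm z" by (rule mult_right_mono[OF _ pair_norm_nonneg])
    thus ?thesis using long[OF z, of k] False by linarith
  qed
  have zero_fix: "f (0\<^sub>v n, 0\<^sub>v N) = (0\<^sub>v n, 0\<^sub>v N)"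
    unfolding f_eq using A B Kc Fc Lc C Blc by (auto intro!: eq_vecI simp: scalar_prod_def)
  have "gas f SS pair_norm (0\<^sub>v n, 0\<^sub>v N)"
    unfolding gas_def
  proof (intro conjI allI impI ballI)
    show "(0\<^sub>v n, 0\<^sub>v N) \<in> SS" unfolding SS_def by auto
    show "f (0\<^sub>v n, 0\<^sub>v N) = (0\<^sub>v n, 0\<^sub>v N)" by (rule zero_fix)
  next
    fix \<epsilon> :: real assume e: "\<epsilon> > 0"
    show "\<exists>\<delta>>0. \<forall>z\<in>SS. pair_norm z < \<delta> \<longrightarrow> (\<forall>k. pair_norm ((f ^^ k) z) < \<epsilon>)"
    proof (intro exI[of _ "\<epsilon> / (E + 1)"] conjI ballI impI allI)
      show "\<epsilon> / (E + 1) > 0" using e E0 by simp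
      fix z k assume z: "z \<in> SS" and zd: "pair_norm z < \<epsilon> / (E + 1)"
      have "pair_norm ((f ^^ k) z) \<le> E * pair_norm z" by (rule allb[OF z])
      also have "\<dots> \<le> E * (\<epsilon> / (E + 1))" using zd E0 by (intro mult_left_mono) auto
      also have "\<dots> < \<epsilon>"
      proof -
        have "E * (\<epsilon> / (E + 1)) = \<epsilon> * (E / (E + 1))" by simp
        also have "E / (E + 1) < 1" using E0 by simp
        hence "\<epsilon> * (E / (E + 1)) < \<epsilon> * 1" using e by (intro mult_strict_left_mono) auto
        finally show ?thesis by simp
      qed
      finally show "pair_norm ((f ^^ k) z) < \<epsilon>" .
    qed
  next
    fix z assume z: "z \<in> SS"
    show "(\<lambda>k. pair_norm ((f ^^ k) z)) \<longlonglongrightarrow> 0"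
    proof (rule tendsto_sandwich[of "\<lambda>_. 0" _ _ "\<lambda>k. (D * pair_norm z / r ^ l) * r ^ k"])
      show "\<forall>\<^sub>F k in sequentially. 0 \<le> pair_norm ((f ^^ k) z)" by (simp add: pair_norm_nonneg)
      show "\<forall>\<^sub>F k in sequentially. pair_norm ((f ^^ k) z) \<le> D * pair_norm z / r ^ l * r ^ k"
        unfolding eventually_sequentially
      proof (intro exI[of _ l] allI impI)
        fix k assume k: "l \<le> k"
        have "r ^ k = r ^ (k - l) * r ^ l" using k by (simp add: power_add[symmetric])
        hence "D * pair_norm z / r ^ l * r ^ k = D * r ^ (k - l) * pair_norm z" using r by simp
        thus "pair_norm ((f ^^ k) z) \<le> D * pair_norm z / r ^ l * r ^ k" using long[OF z k] by simp
      qed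
      show "(\<lambda>_. 0) \<longlonglongrightarrow> (0::real)" by simp
      have "(\<lambda>k. r ^ k) \<longlonglongrightarrow> 0" using r by (intro LIMSEQ_power_zero) simp
      from tendsto_mult[OF tendsto_const[of "D * pair_norm z / r ^ l"] this]
      show "(\<lambda>k. D * pair_norm z / r ^ l * r ^ k) \<longlonglongrightarrow> 0" by simp
    qed
  qed
  thus ?thesis unfolding f_def SS_def N_def F_def L_def Bl_def .
qed

theorem lemma8:
  fixes A B C OL K :: "real mat" and n m p :: nat
  assumes "A \<in> carrier_mat n n" and "B \<in> carrier_mat n m" and "C \<in> carrier_mat p n"
    and "observable p A C"
    and "OL \<in> carrier_mat n (p * obs_index p A C)"
    and "OL * obs_mat p A C (obs_index p A C) = 1\<^sub>m n"
    and "K \<in> carrier_mat m (p * obs_index p A C + m * obs_index p A C)"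
    and "schur (F_mat p m (obs_index p A C)
               + L_mat p m (obs_index p A C) * Z_mat p m A B C OL (obs_index p A C)
               + Bl_mat p m (obs_index p A C) * K)"
  shows "gas (closed_loop A B C (F_mat p m (obs_index p A C)) (L_mat p m (obs_index p A C))
                (Bl_mat p m (obs_index p A C)) K)
             (carrier_vec n \<times> carrier_vec (p * obs_index p A C + m * obs_index p A C))
             pair_norm
             (0\<^sub>v n, 0\<^sub>v (p * obs_index p A C + m * obs_index p A C))"
  by (rule main_gen[OF assms(1-3) assms(5-8)])


end
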